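(* For fixed $0<r<1$, as $n\to\infty$, $$\sum_{j}P_{n,r}(j)\Big(\frac{2j}{n}-r\Big)^2=\frac{1-r^2}{n}-\frac{2(1-r)}{r}\,\frac1{n^2}+O(\gamma^n)$$ for some $\gamma\in(0,1)$ depending only on $r$, where the sum runs over $j\in\{n/2,n/2-1,\dots\}$, $j\ge0$.
   Context: For $n\ge1$ and $0\le r<1$, $P_{n,r}$ is the probability distribution on $j\in\{n/2,n/2-1,\dots\}\cap[0,\infty)$ given by $$P_{n,r}(j)=\Big(\binom{n}{n/2-j}-\binom{n}{n/2-j-1}\Big)\sum_{m=-j}^{j}\Big(\frac{1-r}{2}\Big)^{n/2-m}\Big(\frac{1+r}{2}\Big)^{n/2+m},$$ with $\binom{n}{-1}=0$. (It is the distribution of the total-spin label $j$ obtained by projecting $\rho^{\otimes n}$, for a qubit state $\rho$ with Bloch vector of length $r$, onto the isotypic components of the $SU(2)$ decomposition of $(\mathbb{C}^2)^{\otimes n}$.) *)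

theory Defs
  imports Complex_Main "HOL-Library.Landau_Symbols"
begin

text \<open>The spin label j ranges over n/2, n/2 - 1, ..., down to 0 or 1/2.
  We index it by k = n/2 - j, so k ranges over 0..n div 2 and j = n/2 - k.
  The inner sum over m = -j, ..., j is indexed by i = m + j in 0..n-2k,
  so that n/2 - m = n - k - i and n/2 + m = k + i.\<close>

definition spin_P :: "nat \<Rightarrow> real \<Rightarrow> nat \<Rightarrow> real" where
  "spin_P n r k =
     (real (n choose k) - (if k = 0 then 0 else real (n choose (k - 1)))) *
     (\<Sum>i = 0..n - 2 * k. ((1 - r) / 2) ^ (n - k - i) * ((1 + r) / 2) ^ (k + i))"

definition spin_ratio :: "nat \<Rightarrow> nat \<Rightarrow> real" where
  "spin_ratio n k = (real n - 2 * real k) / real n"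

end

theory Submission
  imports Defs "HOL-Library.Landau_Symbols"
begin

definition bm :: "real \<Rightarrow> real \<Rightarrow> nat \<Rightarrow> (nat \<Rightarrow> real) \<Rightarrow> real" where
  "bm q p n h = (\<Sum>k\<le>n. real (n choose k) * q^k * p^(n-k) * h k)"

lemma bm_one: "q + p = 1 \<Longrightarrow> bm q p n (\<lambda>_. 1) = 1"
  unfolding bm_def using binomial_ring[of q p n] by simp

lemma bm_lin: "bm q p n (\<lambda>k. a * h k + b * g k) = a * bm q p n h + b * bm q p n g"
  unfolding bm_def by (simp add: sum.distrib sum_distrib_left algebra_simps)

lemma bm_shift: "bm q p (Suc m) (\<lambda>k. real k * h k) = real (Suc m) * q * bm q p m (\<lambda>k. h (Suc k))"
proof -
  have "bm q p (Suc m) (\<lambda>k. real k * h k) =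
     (\<Sum>k\<le>m. real (Suc m choose Suc k) * q^(Suc k) * p^(Suc m - Suc k) * (real (Suc k) * h (Suc k)))"
    unfolding bm_def by (subst sum.atMost_Suc_shift) simp
  also have "\<dots> = (\<Sum>k\<le>m. real (Suc m) * q * (real (m choose k) * q^k * p^(m - k) * h (Suc k)))"
  proof (rule sum.cong[OF refl])
    fix k
    have e: "real (Suc k) * real (Suc m choose Suc k) = real (Suc m) * real (m choose k)"
      using Suc_times_binomial[of k m] by (metis of_nat_mult)
    show "real (Suc m choose Suc k) * q^(Suc k) * p^(Suc m - Suc k) * (real (Suc k) * h (Suc k)) =
      real (Suc m) * q * (real (m choose k) * q^k * p^(m - k) * h (Suc k))"
    proof -
      have "real (Suc m choose Suc k) * q^(Suc k) * p^(Suc m - Suc k) * (real (Suc k) * h (Suc k))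
          = (real (Suc k) * real (Suc m choose Suc k)) * (q * (q^k * p^(m - k) * h (Suc k)))"
        by (simp only: power_Suc diff_Suc_Suc mult_ac)
      also have "\<dots> = (real (Suc m) * real (m choose k)) * (q * (q^k * p^(m - k) * h (Suc k)))"
        by (simp only: e)
      also have "\<dots> = real (Suc m) * q * (real (m choose k) * q^k * p^(m - k) * h (Suc k))"
        by (simp only: mult_ac)
      finally show ?thesis .
    qed
  qed
  finally show ?thesis unfolding bm_def by (simp add: sum_distrib_left)
qed

lemma bm_k: assumes qp: "q + p = 1" shows "bm q p n (\<lambda>k. real k) = real n * q"
proof (cases n)
  case 0 then show ?thesis by (simp add: bm_def)
next
  case (Suc m)
  then show ?thesis using bm_shift[of q p m "\<lambda>_. 1"] bm_one[OF qp, of m] by simp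
qed

lemma bm_k2: "q + p = 1 \<Longrightarrow> bm q p n (\<lambda>k. real k ^ 2) = real n * q * ((real n - 1) * q + 1)"
proof (cases n)
  case 0 then show ?thesis by (simp add: bm_def)
next
  case (Suc m)
  assume qp: "q + p = 1"
  have "bm q p (Suc m) (\<lambda>k. real k ^ 2) = bm q p (Suc m) (\<lambda>k. real k * real k)"
    by (simp add: power2_eq_square)
  also have "\<dots> = real (Suc m) * q * bm q p m (\<lambda>k. 1 * real k + 1 * 1)"
    by (subst bm_shift) (simp add: add.commute)
  also have "\<dots> = real (Suc m) * q * (real m * q + 1)"
    by (subst bm_lin) (simp add: bm_k[OF qp] bm_one[OF qp])
  finally show ?thesis using Suc by simp
qed

lemma bm_quad: "q + p = 1 \<Longrightarrow>
  bm q p n (\<lambda>k. a + b * real k + c * real k ^ 2) = a + b * real n * q + c * (real n * q * ((real n - 1) * q + 1))"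
proof -
  assume qp: "q + p = 1"
  have "bm q p n (\<lambda>k. a + b * real k + c * real k ^ 2) =
    bm q p n (\<lambda>k. 1 * (a * 1 + b * real k) + c * real k ^ 2)" by simp
  also have "\<dots> = a + b * real n * q + c * (real n * q * ((real n - 1) * q + 1))"
    by (simp only: bm_lin bm_k[OF qp] bm_k2[OF qp] bm_one[OF qp]) simp
  finally show ?thesis .
qed

lemma pw_bound:
  fixes p q g :: real
  assumes "0 < q" "q \<le> g" "0 \<le> g" "g \<le> 1" "g^2 = p * q" "a \<le> b" "n \<le> a + b"
  shows "p^a * q^b \<le> g^n"
proof -
  have "p^a * q^b = p^a * (q^a * q^(b - a))"
    using assms(6) by (simp add: power_add[symmetric])
  also have "\<dots> = (p*q)^a * q^(b - a)" by (simp add: power_mult_distrib)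
  also have "\<dots> = g^(2*a) * q^(b-a)" using assms(5) by (simp add: power_mult)
  also have "\<dots> \<le> g^(2*a) * g^(b-a)"
    using assms by (intro mult_left_mono power_mono) auto
  also have "\<dots> = g^(a+b)" using assms(6) by (simp add: power_add[symmetric])
  also have "\<dots> \<le> g^n" using assms by (intro power_decreasing) auto
  finally show ?thesis .
qed

lemma sum_choose_bound:
  fixes h :: "nat \<Rightarrow> real"
  assumes "S \<subseteq> {..n}" "\<And>k. k \<in> S \<Longrightarrow> \<bar>h k\<bar> \<le> real (n choose k) * M" "0 \<le> M"
  shows "\<bar>sum h S\<bar> \<le> 2^n * M"
proof -
  have fin: "finite S" using assms(1) finite_subset by blast
  have "\<bar>sum h S\<bar> \<le> (\<Sum>k\<in>S. \<bar>h k\<bar>)" by (rule sum_abs)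
  also have "\<dots> \<le> (\<Sum>k\<in>S. real (n choose k) * M)" by (intro sum_mono assms(2))
  also have "\<dots> \<le> (\<Sum>k\<le>n. real (n choose k) * M)"
    using assms by (intro sum_mono2) auto
  also have "\<dots> = real (\<Sum>k\<le>n. n choose k) * M" by (simp add: sum_distrib_right)
  also have "\<dots> = 2^n * M" by (simp add: choose_row_sum)
  finally show ?thesis .
qed

lemma f_bound:
  assumes "1 \<le> n" "k \<le> n + 1" "0 < r" "r < 1"
  shows "(spin_ratio n k - r)^2 \<le> 16"
proof -
  have n: "real n \<ge> 1" using assms by simp
  have k: "real k \<le> real n + 1" using assms by simp
  have lo: "spin_ratio n k \<ge> -3"
    unfolding spin_ratio_def using n k by (simp add: field_simps)
  have hi: "spin_ratio n k \<le> 1"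
    unfolding spin_ratio_def using n by (simp add: field_simps)
  have "\<bar>spin_ratio n k - r\<bar> \<le> 4" using lo hi assms by linarith
  then have "\<bar>spin_ratio n k - r\<bar>^2 \<le> 4^2" by (intro power_mono) auto
  then show ?thesis by simp
qed

lemma shift_sum:
  fixes h G :: "nat \<Rightarrow> real"
  shows "(\<Sum>k\<le>N. (if k = 0 then 0 else h (k-1)) * G k) = (\<Sum>k<N. h k * G (Suc k))"
  by (induction N) auto

lemma key_alg: fixes r p q :: real assumes r: "0<r" "r<1" and nr: "real n > 0" and pd: "p = (1 + r) / 2" and qd: "q = (1 - r) / 2"
  shows "p * ((1-r)^2 + (- 4 * (1-r) / real n) * real n * q + (4 / real n ^ 2) * (real n * q * ((real n - 1) * q + 1)))
   - q * ((1-r-2/real n)^2 + (- 4 * (1-r-2/real n) / real n) * real n * q + (4 / real n ^ 2) * (real n * q * ((real n - 1) * q + 1)))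
   = r * ((1 - r ^ 2) / real n - (2 * (1 - r) / r) / (real n) ^ 2)"
    unfolding pd qd using nr r by (simp add: field_simps power2_eq_square)

lemma main_n:
  fixes r p q g :: real and n :: nat
  assumes r: "0 < r" "r < 1" and pd: "p = (1 + r) / 2" and qd: "q = (1 - r) / 2"
    and gd: "g = sqrt (p * q)" and n1: "1 \<le> n"
  shows "\<bar>(\<Sum>k = 0..n div 2. spin_P n r k * (spin_ratio n k - r) ^ 2)
        - ((1 - r ^ 2) / real n - (2 * (1 - r) / r) / (real n) ^ 2)\<bar> \<le> 48 / r * (2 * g) ^ n"
proof -
  define N where "N = n div 2"
  define c where "c k = real (n choose k)" for k
  define f where "f k = (spin_ratio n k - r)^2" for k
  define A where "A k = p^(n+1-k) * q^k" for k
  define Bk where "Bk k = p^k * q^(n+1-k)" for k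
  define dd where "dd k = c k - (if k = 0 then 0 else c (k-1))" for k
  have q0: "0 < q" and qp: "q + p = 1" and pq: "p - q = r" and qlp: "q \<le> p"
    using r pd qd by auto
  have p0: "0 < p" using r pd by auto
  have g0: "0 \<le> g" using gd p0 q0 by simp
  have g2: "g^2 = p * q" using gd p0 q0 by simp
  have qg: "q \<le> g" unfolding gd using q0 qlp
  proof -
    have "q * q \<le> p * q" using q0 qlp by (intro mult_right_mono) auto
    then have "sqrt (q * q) \<le> sqrt (p * q)" by (rule real_sqrt_le_mono)
    then show "q \<le> sqrt (p * q)" using q0 by simp
  qed
  have g1: "g \<le> 1" unfolding gd using p0 q0 qp
  proof -
    have "p * q \<le> 1" using p0 q0 qp by (intro mult_le_one) auto
    then show "sqrt (p * q) \<le> 1" by simp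
  qed
  have step1: "spin_P n r k = dd k * (A k - Bk k) / r" if kN: "k \<le> N" for k
  proof -
    define m where "m = n - 2 * k"
    have nm: "n = 2 * k + m" using kN unfolding m_def N_def by auto
    have "(\<Sum>i = 0..n - 2 * k. ((1 - r) / 2) ^ (n - k - i) * ((1 + r) / 2) ^ (k + i))
        = (\<Sum>i<Suc m. (p*q)^k * (q^(m - i) * p^i))"
      unfolding m_def[symmetric] pd[symmetric] qd[symmetric]
    proof (rule sum.cong)
      show "{0..m} = {..<Suc m}" by auto
      fix i assume "i \<in> {..<Suc m}"
      then have "n - k - i = k + (m - i)" using nm by auto
      then show "q ^ (n - k - i) * p ^ (k + i) = (p*q)^k * (q^(m - i) * p^i)"
        by (simp add: power_add power_mult_distrib)
    qed
    also have "\<dots> = (p*q)^k * (p^(Suc m) - q^(Suc m)) / r"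
      using power_diff_sumr2[of p "Suc m" q] pq r by (simp add: sum_distrib_left[symmetric])
    also have "\<dots> = (A k - Bk k) / r"
    proof -
      have "n + 1 - k = k + Suc m" using nm by simp
      then show ?thesis unfolding A_def Bk_def
        by (simp add: power_add power_mult_distrib algebra_simps)
    qed
    finally show ?thesis unfolding spin_P_def dd_def c_def by simp
  qed
  have S_eq: "(\<Sum>k = 0..n div 2. spin_P n r k * (spin_ratio n k - r) ^ 2)
      = ((\<Sum>k\<le>N. dd k * A k * f k) - (\<Sum>k\<le>N. dd k * Bk k * f k)) / r"
    unfolding N_def[symmetric] atLeast0AtMost
    by (simp add: step1 f_def sum_divide_distrib[symmetric] sum_subtractf[symmetric] algebra_simps)
  have X_eq: "(\<Sum>k\<le>N. dd k * A k * f k) = (\<Sum>k\<le>N. c k * A k * f k) - (\<Sum>k<N. c k * A (Suc k) * f (Suc k))"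
  proof -
    have "(\<Sum>k\<le>N. dd k * A k * f k) = (\<Sum>k\<le>N. c k * A k * f k) - (\<Sum>k\<le>N. (if k = 0 then 0 else c (k-1)) * (A k * f k))"
      unfolding dd_def by (simp add: sum_subtractf[symmetric] algebra_simps)
    then show ?thesis using shift_sum[of c "\<lambda>k. A k * f k" N] by (simp add: mult.assoc)
  qed
  define T1 where "T1 = (\<Sum>k = Suc N..n. c k * A k * f k)"
  define T2 where "T2 = (\<Sum>k = N..n. c k * A (Suc k) * f (Suc k))"
  define Y where "Y = (\<Sum>k\<le>N. dd k * Bk k * f k)"
  have Nn: "N \<le> n" unfolding N_def by simp
  have F1: "(\<Sum>k\<le>n. c k * A k * f k) = (\<Sum>k\<le>N. c k * A k * f k) + T1"
    unfolding T1_def using sum_up_index_split[of "\<lambda>k. c k * A k * f k" N "n - N"] Nn by simp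
  have F2: "(\<Sum>k\<le>n. c k * A (Suc k) * f (Suc k)) = (\<Sum>k<N. c k * A (Suc k) * f (Suc k)) + T2"
  proof -
    have "{..n} = {..<N} \<union> {N..n}" using Nn by auto
    then have "(\<Sum>k\<le>n. c k * A (Suc k) * f (Suc k)) = (\<Sum>k\<in>{..<N} \<union> {N..n}. c k * A (Suc k) * f (Suc k))"
      by simp
    also have "\<dots> = (\<Sum>k<N. c k * A (Suc k) * f (Suc k)) + (\<Sum>k=N..n. c k * A (Suc k) * f (Suc k))"
      by (rule sum.union_disjoint) auto
    finally show ?thesis unfolding T2_def .
  qed
  have nr: "real n > 0" using n1 by simp
  have fq: "f k = (1-r)^2 + (- 4 * (1-r) / real n) * real k + (4 / real n ^ 2) * real k ^ 2" for k
    unfolding f_def spin_ratio_def using nr by (simp add: field_simps power2_eq_square)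
  have fq': "f (Suc k) = (1-r-2/real n)^2 + (- 4 * (1-r-2/real n) / real n) * real k + (4 / real n ^ 2) * real k ^ 2" for k
    unfolding f_def spin_ratio_def using nr by (simp add: field_simps power2_eq_square)
  have Full1: "(\<Sum>k\<le>n. c k * A k * f k) = p * bm q p n f"
    unfolding bm_def sum_distrib_left
  proof (rule sum.cong[OF refl])
    fix k assume "k \<in> {..n}"
    then have "n + 1 - k = Suc (n - k)" by auto
    then show "c k * A k * f k = p * (real (n choose k) * q ^ k * p ^ (n - k) * f k)"
      unfolding A_def c_def by simp
  qed
  have Full2: "(\<Sum>k\<le>n. c k * A (Suc k) * f (Suc k)) = q * bm q p n (\<lambda>k. f (Suc k))"
    unfolding bm_def sum_distrib_left
    by (rule sum.cong[OF refl]) (simp add: A_def c_def)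
  have bm1: "bm q p n f = (1-r)^2 + (- 4 * (1-r) / real n) * real n * q + (4 / real n ^ 2) * (real n * q * ((real n - 1) * q + 1))"
  proof -
    have fe: "f = (\<lambda>k. (1-r)^2 + (- 4 * (1-r) / real n) * real k + (4 / real n ^ 2) * real k ^ 2)" using fq by (intro ext)
    show ?thesis unfolding fe by (rule bm_quad[OF qp])
  qed
  have bm2: "bm q p n (\<lambda>k. f (Suc k)) = (1-r-2/real n)^2 + (- 4 * (1-r-2/real n) / real n) * real n * q + (4 / real n ^ 2) * (real n * q * ((real n - 1) * q + 1))"
  proof -
    have fe: "(\<lambda>k. f (Suc k)) = (\<lambda>k. (1-r-2/real n)^2 + (- 4 * (1-r-2/real n) / real n) * real k + (4 / real n ^ 2) * real k ^ 2)" using fq' by (intro ext)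
    show ?thesis unfolding fe by (rule bm_quad[OF qp])
  qed
  have key: "p * bm q p n f - q * bm q p n (\<lambda>k. f (Suc k)) = r * ((1 - r ^ 2) / real n - (2 * (1 - r) / r) / (real n) ^ 2)"
    unfolding bm1 bm2 by (rule key_alg[OF r nr pd qd])
  have diff: "(\<Sum>k = 0..n div 2. spin_P n r k * (spin_ratio n k - r) ^ 2)
        - ((1 - r ^ 2) / real n - (2 * (1 - r) / r) / (real n) ^ 2) = (T2 - T1 - Y) / r"
  proof -
    have t: "((1 - r ^ 2) / real n - (2 * (1 - r) / r) / (real n) ^ 2) = ((\<Sum>k\<le>n. c k * A k * f k) - (\<Sum>k\<le>n. c k * A (Suc k) * f (Suc k))) / r"
      unfolding Full1 Full2 key using r by simp
    show ?thesis unfolding S_eq X_eq t F1 F2 Y_def[symmetric] using r by (simp add: field_simps)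
  qed
  have fb: "0 \<le> f k \<and> f k \<le> 16" if "k \<le> n + 1" for k
    unfolding f_def using f_bound[OF n1 that r] by simp
  have M0: "0 \<le> 16 * g^n" using g0 by simp
  have bT1: "\<bar>T1\<bar> \<le> 2^n * (16 * g^n)" unfolding T1_def
  proof (rule sum_choose_bound[OF _ _ M0])
    fix k assume k: "k \<in> {Suc N..n}"
    have a1: "A k \<le> g^n" unfolding A_def
      using k by (intro pw_bound[OF q0 qg g0 g1 g2]) (auto simp: N_def)
    have a2: "0 \<le> A k" unfolding A_def using p0 q0 by simp
    have a3: "0 \<le> c k" unfolding c_def by simp
    show "\<bar>c k * A k * f k\<bar> \<le> real (n choose k) * (16 * g^n)"
    proof -
      have fk: "0 \<le> f k \<and> f k \<le> 16" using fb[of "k"] k Nn by auto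
      have h: "A k * f k \<le> g^n * 16" using fk a1 a2 a3 by (intro mult_mono) auto
      have "\<bar>c k * A k * f k\<bar> = c k * (A k * f k)" using fk a1 a2 a3 by (simp add: abs_mult mult.assoc)
      also have "\<dots> \<le> c k * (g^n * 16)" using a1 a2 a3 by (intro mult_left_mono h) auto
      finally show ?thesis by (simp add: c_def mult_ac)
    qed
  qed auto
  have bT2: "\<bar>T2\<bar> \<le> 2^n * (16 * g^n)" unfolding T2_def
  proof (rule sum_choose_bound[OF _ _ M0])
    fix k assume k: "k \<in> {N..n}"
    have a1: "A (Suc k) \<le> g^n" unfolding A_def
      using k by (intro pw_bound[OF q0 qg g0 g1 g2]) (auto simp: N_def)
    have a2: "0 \<le> A (Suc k)" unfolding A_def using p0 q0 by simp
    have a3: "0 \<le> c k" unfolding c_def by simp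
    show "\<bar>c k * A (Suc k) * f (Suc k)\<bar> \<le> real (n choose k) * (16 * g^n)"
    proof -
      have fk: "0 \<le> f (Suc k) \<and> f (Suc k) \<le> 16" using fb[of "Suc k"] k Nn by auto
      have h: "A (Suc k) * f (Suc k) \<le> g^n * 16" using fk a1 a2 a3 by (intro mult_mono) auto
      have "\<bar>c k * A (Suc k) * f (Suc k)\<bar> = c k * (A (Suc k) * f (Suc k))" using fk a1 a2 a3 by (simp add: abs_mult mult.assoc)
      also have "\<dots> \<le> c k * (g^n * 16)" using a1 a2 a3 by (intro mult_left_mono h) auto
      finally show ?thesis by (simp add: c_def mult_ac)
    qed
  qed auto
  have bY: "\<bar>Y\<bar> \<le> 2^n * (16 * g^n)" unfolding Y_def
  proof (rule sum_choose_bound[OF _ _ M0])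
    fix k assume k: "k \<in> {..N}"
    have a1: "Bk k \<le> g^n" unfolding Bk_def
      using k by (intro pw_bound[OF q0 qg g0 g1 g2]) (auto simp: N_def)
    have a2: "0 \<le> Bk k" unfolding Bk_def using p0 q0 by simp
    have a3: "0 \<le> dd k \<and> dd k \<le> c k"
    proof (cases k)
      case 0 then show ?thesis unfolding dd_def c_def by simp
    next
      case (Suc j)
      have "n choose j \<le> n choose k" using k Suc by (intro binomial_mono) (auto simp: N_def)
      then show ?thesis unfolding dd_def c_def using Suc by simp
    qed
    show "\<bar>dd k * Bk k * f k\<bar> \<le> real (n choose k) * (16 * g^n)"
    proof -
      have fk: "0 \<le> f k \<and> f k \<le> 16" using fb[of "k"] k Nn by auto
      have h: "Bk k * f k \<le> g^n * 16" using fk a1 a2 a3 by (intro mult_mono) auto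
      have "\<bar>dd k * Bk k * f k\<bar> = dd k * (Bk k * f k)" using fk a1 a2 a3 by (simp add: abs_mult mult.assoc)
      also have "\<dots> \<le> dd k * (g^n * 16)" using a1 a2 a3 by (intro mult_left_mono h) auto
      also have "\<dots> \<le> c k * (g^n * 16)" using a1 a2 a3 by (intro mult_right_mono) (auto simp: g0)
      finally show ?thesis by (simp add: c_def mult_ac)
    qed
  qed (use Nn in auto)
  have "\<bar>(T2 - T1 - Y) / r\<bar> \<le> 3 * (2^n * (16 * g^n)) / r"
    using bT1 bT2 bY r by (simp add: divide_right_mono)
  also have "\<dots> = 48 / r * (2 * g) ^ n" by (simp add: power_mult_distrib)
  finally show ?thesis unfolding diff .
qed

theorem mainTheorem11:
  fixes r :: real
  assumes "0 < r" and "r < 1"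
  shows "\<exists>\<gamma>::real. 0 < \<gamma> \<and> \<gamma> < 1 \<and>
    (\<lambda>n::nat. (\<Sum>k = 0..n div 2. spin_P n r k * (spin_ratio n k - r) ^ 2)
        - ((1 - r ^ 2) / real n - (2 * (1 - r) / r) / (real n) ^ 2))
    \<in> O(\<lambda>n. \<gamma> ^ n)"
proof -
  define p where "p = (1 + r) / 2"
  define q where "q = (1 - r) / 2"
  define g where "g = sqrt (p * q)"
  have pq0: "0 < p * q" using assms unfolding p_def q_def by simp
  have pq1: "p * q < 1/4" using assms unfolding p_def q_def by (simp add: field_simps)
  have g0: "0 < g" unfolding g_def using pq0 by simp
  have "g < sqrt (1/4)" unfolding g_def using pq1 by (simp only: real_sqrt_less_iff)
  moreover have "sqrt (1/4::real) = 1/2" by (simp add: real_sqrt_divide)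
  ultimately have g1: "2 * g < 1" by simp
  have "(\<lambda>n::nat. (\<Sum>k = 0..n div 2. spin_P n r k * (spin_ratio n k - r) ^ 2)
        - ((1 - r ^ 2) / real n - (2 * (1 - r) / r) / (real n) ^ 2))
    \<in> O(\<lambda>n. (2 * g) ^ n)"
  proof (rule bigoI[where c = "48 / r"])
    have "eventually (\<lambda>n::nat. 1 \<le> n) sequentially" by (rule eventually_ge_at_top)
    then show "eventually (\<lambda>n. norm ((\<Sum>k = 0..n div 2. spin_P n r k * (spin_ratio n k - r) ^ 2)
        - ((1 - r ^ 2) / real n - (2 * (1 - r) / r) / (real n) ^ 2)) \<le> 48 / r * norm ((2 * g) ^ n)) sequentially"
    proof (rule eventually_mono)
      fix n :: nat assume "1 \<le> n"
      then show "norm ((\<Sum>k = 0..n div 2. spin_P n r k * (spin_ratio n k - r) ^ 2)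
        - ((1 - r ^ 2) / real n - (2 * (1 - r) / r) / (real n) ^ 2)) \<le> 48 / r * norm ((2 * g) ^ n)"
        using main_n[OF assms p_def q_def g_def] g0 by simp
    qed
  qed
  then show ?thesis using g0 g1 by (intro exI[of _ "2 * g"]) simp
qed

end
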